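(* Let $\mathbf{H}_1,\mathbf{H}_2$ be complex Hilbert spaces with $\mathbf{H}_1$ separable with orthonormal basis $(\psi_j)_{j\ge0}$, $H=\mathbf{H}_1\otimes\mathbf{H}_2$, $\mathcal{A}:H\to H$ bounded linear, $\varphi\in H$. Let $y_1,\dots,y_n\in\mathbf{H}_2$ with $\langle y_i,y_j\rangle_2=\delta_{ij}$ and let $k_1,\dots,k_n\in\mathbf{H}_2$ be linearly independent with $\langle k_i,y_j\rangle_2=\delta_{ij}$. Assume $\|\mathcal{A}\mathcal{P}_k\|<1$ and $\tilde{\mathcal{P}}_k\sum_{i=0}^{\infty}(\mathcal{A}\mathcal{P}_k)^i\varphi=0$. Then there exists $\delta>0$ such that for every $\varepsilon$ with $|\varepsilon|<\delta$ and every $\eta_1,\dots,\eta_n\in\mathbf{H}_2$ with $\|\eta_i\|=1$ and $\langle\eta_i,y_j\rangle_2=0$ for all $i,j$, setting $k'_i=k_i+\varepsilon\eta_i$, the series $x':=\sum_{i=0}^{\infty}(\mathcal{A}\mathcal{P}_{k'})^i\varphi$ converges and $\tilde{\mathcal{P}}_{k'}x'=0$. If moreover $k'_1,\dots,k'_n$ are linearly independent, then $x'$ solves $\mathcal{A}x'+\varphi=x'$ subject to the constraints $\langle x',y_i\rangle_{2'}=0$ for $i=1,\dots,n$ (equivalently $\langle x',\psi_j\otimes y_i\rangle=0$ for all $j\ge0$, $1\le i\le n$).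
   Context: $H=\mathbf{H}_1\otimes\mathbf{H}_2$ is the Hilbert tensor product with inner product $\langle\cdot,\cdot\rangle$; $\langle\cdot,\cdot\rangle_1,\langle\cdot,\cdot\rangle_2$ are the inner products of $\mathbf{H}_1,\mathbf{H}_2$ (linear in the first argument). The partial inner product $\langle\cdot,\cdot\rangle_{2'}:H\times\mathbf{H}_2\to\mathbf{H}_1$ is determined by $\langle\langle x,y\rangle_{2'},z\rangle_1=\langle x,z\otimes y\rangle$ for all $x\in H$, $y\in\mathbf{H}_2$, $z\in\mathbf{H}_1$. For $u_1,\dots,u_n\in\mathbf{H}_2$: $\mathcal{P}_u x=x-\sum_{i=1}^n\langle x,y_i\rangle_{2'}\otimes u_i$ and $\tilde{\mathcal{P}}_u x=\sum_{i=1}^n\langle x,y_i\rangle_{2'}\otimes u_i$. $\|\cdot\|$ is the operator norm. *)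

theory Defs
  imports "HOL-Analysis.Analysis"
begin

class complex_vector = real_vector +
  fixes scaleC :: "complex \<Rightarrow> 'a \<Rightarrow> 'a" (infixr "*\<^sub>C" 75)
  assumes scaleC_add_right: "a *\<^sub>C (x + y) = a *\<^sub>C x + a *\<^sub>C y"
    and scaleC_add_left: "(a + b) *\<^sub>C x = a *\<^sub>C x + b *\<^sub>C x"
    and scaleC_scaleC: "a *\<^sub>C (b *\<^sub>C x) = (a * b) *\<^sub>C x"
    and scaleC_one: "1 *\<^sub>C x = x"
    and scaleR_scaleC: "r *\<^sub>R x = complex_of_real r *\<^sub>C x"

class complex_inner = complex_vector + real_normed_vector +
  fixes cinner :: "'a \<Rightarrow> 'a \<Rightarrow> complex"
  assumes cinner_commute: "cinner x y = cnj (cinner y x)"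
    and cinner_add_left: "cinner (x + y) z = cinner x z + cinner y z"
    and cinner_scaleC_left: "cinner (c *\<^sub>C x) y = c * cinner x y"
    and cinner_self_norm: "cinner x x = complex_of_real ((norm x)\<^sup>2)"

class chilbert_space = complex_inner + complete_space

definition clinear :: "('a::complex_vector \<Rightarrow> 'b::complex_vector) \<Rightarrow> bool" where
  "clinear f \<longleftrightarrow> (\<forall>x y. f (x + y) = f x + f y) \<and> (\<forall>c x. f (c *\<^sub>C x) = c *\<^sub>C f x)"

definition bounded_clinear :: "('a::complex_inner \<Rightarrow> 'b::complex_inner) \<Rightarrow> bool" where
  "bounded_clinear f \<longleftrightarrow> clinear f \<and> (\<exists>K. \<forall>x. norm (f x) \<le> norm x * K)"

definition cspan :: "'a::complex_vector set \<Rightarrow> 'a set" where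
  "cspan S = {x. \<exists>F c. finite F \<and> F \<subseteq> S \<and> x = (\<Sum>v\<in>F. c v *\<^sub>C v)}"

definition clin_indep :: "nat \<Rightarrow> (nat \<Rightarrow> 'a::complex_vector) \<Rightarrow> bool" where
  "clin_indep n u \<longleftrightarrow> (\<forall>c. (\<Sum>i<n. c i *\<^sub>C u i) = 0 \<longrightarrow> (\<forall>i<n. c i = 0))"

definition orthonormal_basis :: "nat set \<Rightarrow> (nat \<Rightarrow> 'a::chilbert_space) \<Rightarrow> bool" where
  "orthonormal_basis J \<psi> \<longleftrightarrow>
     (\<forall>i\<in>J. \<forall>j\<in>J. cinner (\<psi> i) (\<psi> j) = (if i = j then 1 else 0)) \<and>
     closure (cspan (\<psi> ` J)) = UNIV"

text \<open>tens realises H as the Hilbert tensor product H1 \<otimes> H2 (characterised up to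
  unitary isomorphism): bilinear, inner product of simple tensors multiplies,
  and the span of simple tensors is dense.\<close>
definition hilbert_tensor :: "('h1::chilbert_space \<Rightarrow> 'h2::chilbert_space \<Rightarrow> 'h::chilbert_space) \<Rightarrow> bool" where
  "hilbert_tensor tens \<longleftrightarrow>
     (\<forall>b. clinear (\<lambda>a. tens a b)) \<and> (\<forall>a. clinear (\<lambda>b. tens a b)) \<and>
     (\<forall>a b c d. cinner (tens a b) (tens c d) = cinner a c * cinner b d) \<and>
     closure (cspan (range (case_prod tens))) = UNIV"

text \<open>Partial inner product: the unique w with cinner w z = cinner x (z \<otimes> y) for all z.\<close>
definition pinner2 :: "('h1::chilbert_space \<Rightarrow> 'h2::chilbert_space \<Rightarrow> 'h::chilbert_space) \<Rightarrow> 'h \<Rightarrow> 'h2 \<Rightarrow> 'h1" where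
  "pinner2 tens x y = (THE w. \<forall>z. cinner w z = cinner x (tens z y))"

definition Ptil :: "('h1::chilbert_space \<Rightarrow> 'h2::chilbert_space \<Rightarrow> 'h::chilbert_space) \<Rightarrow> nat \<Rightarrow>
    (nat \<Rightarrow> 'h2) \<Rightarrow> (nat \<Rightarrow> 'h2) \<Rightarrow> 'h \<Rightarrow> 'h" where
  "Ptil tens n y u x = (\<Sum>i<n. tens (pinner2 tens x (y i)) (u i))"

definition Pu :: "('h1::chilbert_space \<Rightarrow> 'h2::chilbert_space \<Rightarrow> 'h::chilbert_space) \<Rightarrow> nat \<Rightarrow>
    (nat \<Rightarrow> 'h2) \<Rightarrow> (nat \<Rightarrow> 'h2) \<Rightarrow> 'h \<Rightarrow> 'h" where
  "Pu tens n y u x = x - Ptil tens n y u x"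

end

theory Submission
  imports Defs
begin

lemma scaleC_zero_right [simp]: "c *\<^sub>C (0::'a::complex_vector) = 0"
  by (metis add_cancel_right_right add_0 scaleC_add_right)
lemma scaleC_zero_left [simp]: "0 *\<^sub>C (x::'a::complex_vector) = 0"
  by (metis scaleR_scaleC scale_zero_left of_real_0)
lemma scaleC_of_real: "complex_of_real r *\<^sub>C (x::'a::complex_vector) = r *\<^sub>R x"
  by (simp add: scaleR_scaleC)
lemma scaleC_minus1: "(-1) *\<^sub>C (x::'a::complex_vector) = - x"
  by (metis scaleR_scaleC scaleR_minus1_left of_real_1 of_real_minus)
lemma scaleC_minus_right: "c *\<^sub>C (- (x::'a::complex_vector)) = - (c *\<^sub>C x)"
proof -
  have "c *\<^sub>C (- x) = c *\<^sub>C ((-1) *\<^sub>C x)" by (simp only: scaleC_minus1)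
  also have "\<dots> = (-1) *\<^sub>C (c *\<^sub>C x)" by (simp only: scaleC_scaleC mult.commute)
  also have "\<dots> = - (c *\<^sub>C x)" by (rule scaleC_minus1)
  finally show ?thesis .
qed
lemma scaleC_diff_right: "c *\<^sub>C ((x::'a::complex_vector) - y) = c *\<^sub>C x - c *\<^sub>C y"
  by (metis diff_conv_add_uminus scaleC_add_right scaleC_minus_right)
lemma scaleC_sum_right: "c *\<^sub>C (\<Sum>i\<in>S. f i) = (\<Sum>i\<in>S. c *\<^sub>C (f i::'a::complex_vector))"
  by (induction S rule: infinite_finite_induct) (auto simp: scaleC_add_right)

lemma cinner_zero_left [simp]: "cinner 0 (y::'a::complex_inner) = 0"
  by (metis add_cancel_right_right add_0 cinner_add_left)
lemma cinner_zero_right [simp]: "cinner (y::'a::complex_inner) 0 = 0"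
  by (metis cinner_commute cinner_zero_left complex_cnj_zero)
lemma cinner_add_right: "cinner (x::'a::complex_inner) (y + z) = cinner x y + cinner x z"
  by (metis cinner_commute cinner_add_left complex_cnj_add)
lemma cinner_scaleC_right: "cinner (x::'a::complex_inner) (c *\<^sub>C y) = cnj c * cinner x y"
  by (metis cinner_commute cinner_scaleC_left complex_cnj_mult)
lemma cinner_minus_left: "cinner (- (x::'a::complex_inner)) y = - cinner x y"
proof -
  have "cinner (- x) y = cinner ((-1) *\<^sub>C x) y" by (simp only: scaleC_minus1)
  also have "\<dots> = - cinner x y" by (simp only: cinner_scaleC_left) simp
  finally show ?thesis .
qed
lemma cinner_minus_right: "cinner (x::'a::complex_inner) (- y) = - cinner x y"
  by (metis cinner_commute cinner_minus_left complex_cnj_minus)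
lemma cinner_diff_left: "cinner ((x::'a::complex_inner) - y) z = cinner x z - cinner y z"
  by (simp only: diff_conv_add_uminus cinner_add_left cinner_minus_left)
lemma cinner_diff_right: "cinner (x::'a::complex_inner) (y - z) = cinner x y - cinner x z"
  by (simp only: diff_conv_add_uminus cinner_add_right cinner_minus_right)
lemma cinner_sum_left: "cinner (\<Sum>i\<in>S. f i) (y::'a::complex_inner) = (\<Sum>i\<in>S. cinner (f i) y)"
  by (induction S rule: infinite_finite_induct) (auto simp: cinner_add_left)
lemma cinner_scaleR_left: "cinner (r *\<^sub>R (x::'a::complex_inner)) y = of_real r * cinner x y"
  by (simp add: scaleR_scaleC cinner_scaleC_left)
lemma cinner_scaleR_right: "cinner (x::'a::complex_inner) (r *\<^sub>R y) = of_real r * cinner x y"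
  by (simp add: scaleR_scaleC cinner_scaleC_right)
lemma Re_cinner_self: "Re (cinner (x::'a::complex_inner) x) = (norm x)\<^sup>2"
  by (simp add: cinner_self_norm)
lemma cinner_self_zero: "cinner (x::'a::complex_inner) x = 0 \<Longrightarrow> x = 0"
  by (simp add: cinner_self_norm)

lemma norm_add_sq: "(norm ((x::'a::complex_inner) + y))\<^sup>2 = (norm x)\<^sup>2 + (norm y)\<^sup>2 + 2 * Re (cinner x y)"
proof -
  have "cinner (x+y) (x+y) = cinner x x + cinner y y + (cinner x y + cnj (cinner x y))"
    by (simp add: cinner_add_left cinner_add_right cinner_commute[of y x])
  then have "Re (cinner (x+y) (x+y)) = Re (cinner x x) + Re (cinner y y) + 2 * Re (cinner x y)"
    by simp
  then show ?thesis by (simp add: Re_cinner_self)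
qed

lemma norm_scaleC: "norm (c *\<^sub>C (x::'a::complex_inner)) = cmod c * norm x"
proof -
  have "cinner (c *\<^sub>C x) (c *\<^sub>C x) = (c * cnj c) * cinner x x"
    by (simp add: cinner_scaleC_left cinner_scaleC_right)
  also have "c * cnj c = of_real ((cmod c)\<^sup>2)" by (rule complex_norm_square[symmetric])
  finally have e: "cinner (c *\<^sub>C x) (c *\<^sub>C x) = of_real ((cmod c)\<^sup>2) * cinner x x" .
  have "Re (cinner (c *\<^sub>C x) (c *\<^sub>C x)) = (cmod c)\<^sup>2 * Re (cinner x x)"
    unfolding e by simp
  then have "(norm (c *\<^sub>C x))\<^sup>2 = (cmod c)\<^sup>2 * (norm x)\<^sup>2"
    by (simp only: Re_cinner_self)
  then have "(norm (c *\<^sub>C x))\<^sup>2 = (cmod c * norm x)\<^sup>2" by (simp add: power_mult_distrib)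
  then show ?thesis by (simp add: power2_eq_iff_nonneg)
qed

lemma cauchy_schwarz_Re: "Re (cinner (x::'a::complex_inner) y) \<le> norm x * norm y"
proof (cases "y = 0")
  case True then show ?thesis by simp
next
  case False
  define r where "r = Re (cinner x y)"
  define Y where "Y = (norm y)\<^sup>2"
  have Y: "Y > 0" using False by (simp add: Y_def)
  define s where "s = r / Y"
  have "0 \<le> (norm (x + (-s) *\<^sub>R y))\<^sup>2" by simp
  also have "\<dots> = (norm x)\<^sup>2 + (norm ((-s) *\<^sub>R y))\<^sup>2 + 2 * Re (cinner x ((-s) *\<^sub>R y))"
    by (rule norm_add_sq)
  also have "\<dots> = (norm x)\<^sup>2 + s\<^sup>2 * Y - 2 * s * r"
    by (simp only: cinner_scaleR_right norm_scaleR) (simp add: r_def Y_def power_mult_distrib)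
  also have "s\<^sup>2 * Y = r\<^sup>2 / Y" using Y by (simp add: s_def power2_eq_square)
  also have "2 * s * r = 2 * (r\<^sup>2 / Y)" by (simp add: s_def power2_eq_square)
  finally have "r\<^sup>2 / Y \<le> (norm x)\<^sup>2" by simp
  then have "r\<^sup>2 \<le> (norm x)\<^sup>2 * Y" using Y by (simp add: pos_divide_le_eq)
  then have "r\<^sup>2 \<le> (norm x * norm y)\<^sup>2" by (simp add: Y_def power_mult_distrib)
  then show ?thesis unfolding r_def
    by (rule power2_le_imp_le) simp
qed

lemma cauchy_schwarz: "cmod (cinner (x::'a::complex_inner) y) \<le> norm x * norm y"
proof (cases "cinner x y = 0")
  case True then show ?thesis by simp
next
  case False
  define c where "c = cinner x y"
  have "Re (cinner (cnj c *\<^sub>C x) y) \<le> norm (cnj c *\<^sub>C x) * norm y" by (rule cauchy_schwarz_Re)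
  moreover have "cinner (cnj c *\<^sub>C x) y = of_real ((cmod c)\<^sup>2)"
  proof -
    have "cinner (cnj c *\<^sub>C x) y = cnj c * c" by (simp add: cinner_scaleC_left c_def)
    also have "\<dots> = c * cnj c" by (rule mult.commute)
    also have "\<dots> = of_real ((cmod c)\<^sup>2)" by (rule complex_norm_square[symmetric])
    finally show ?thesis .
  qed
  ultimately have "cmod c * cmod c \<le> cmod c * (norm x * norm y)"
    by (simp only: norm_scaleC complex_mod_cnj Re_complex_of_real power2_eq_square mult.assoc)
  moreover have "0 < cmod c" using False c_def by simp
  ultimately show ?thesis unfolding c_def by (rule mult_left_le_imp_le)
qed

lemma riesz:
  fixes f :: "'a::chilbert_space \<Rightarrow> complex"
  assumes add: "\<And>a b. f (a+b) = f a + f b" and sc: "\<And>c a. f (c *\<^sub>C a) = c * f a"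
    and bd: "\<And>z. cmod (f z) \<le> B * norm z"
  shows "\<exists>w. \<forall>z. f z = cinner z w"
proof (cases "\<forall>z. f z = 0")
  case True then show ?thesis by (intro exI[of _ 0]) simp
next
  case False
  then obtain u where fu: "f u \<noteq> 0" by blast
  have blf: "bounded_linear f"
  proof (rule bounded_linear_intro[where K=B])
    fix x y show "f (x + y) = f x + f y" by (rule add)
  next
    fix r x show "f (r *\<^sub>R x) = r *\<^sub>R f x" by (simp add: scaleR_scaleC sc scaleR_conv_of_real)
  next
    fix x show "norm (f x) \<le> norm x * B" using bd[of x] by (simp add: mult.commute)
  qed
  have f0: "f 0 = 0" using sc[of 0 0] by simp
  have fdiff: "\<And>a b. f (a - b) = f a - f b"
    using blf bounded_linear.linear linear_diff by blast
  define C where "C = {z. f z = 1}"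
  have u1: "(1 / f u) *\<^sub>C u \<in> C" using fu by (simp add: C_def sc)
  define d where "d = Inf (norm ` C)"
  have bdd: "bdd_below (norm ` C)" by (rule bdd_belowI[of _ 0]) auto
  have d_le: "\<And>c. c \<in> C \<Longrightarrow> d \<le> norm c" unfolding d_def
    by (rule cInf_lower) (auto simp: bdd)
  have d0: "0 \<le> d" unfolding d_def
    by (rule cInf_greatest) (use u1 in auto)
  have ex: "\<forall>m. \<exists>v. v \<in> C \<and> norm v < d + inverse (real (Suc m))"
  proof
    fix m
    have "Inf (norm ` C) < d + inverse (real (Suc m))" by (simp add: d_def)
    then obtain t where "t \<in> norm ` C" "t < d + inverse (real (Suc m))"
      using cInf_lessD[of "norm ` C"] u1 by blast
    then show "\<exists>v. v \<in> C \<and> norm v < d + inverse (real (Suc m))" by blast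
  qed
  then obtain z where z: "\<And>m. z m \<in> C" "\<And>m. norm (z m) < d + inverse (real (Suc m))"
    by metis
  have halfC: "(1/2) *\<^sub>R (a + b) \<in> C" if "a \<in> C" "b \<in> C" for a b
  proof -
    have "f ((1/2) *\<^sub>R (a + b)) = of_real (1/2) * (f a + f b)"
      by (simp only: scaleR_scaleC sc add)
    then show ?thesis using that by (simp add: C_def)
  qed
  have para: "(norm (a - b))\<^sup>2 \<le> 2*(norm a)\<^sup>2 + 2*(norm b)\<^sup>2 - 4*d\<^sup>2" if "a \<in> C" "b \<in> C" for a b
  proof -
    have e1: "(norm (a + b))\<^sup>2 = (norm a)\<^sup>2 + (norm b)\<^sup>2 + 2 * Re (cinner a b)" by (rule norm_add_sq)
    have "(norm (a + - b))\<^sup>2 = (norm a)\<^sup>2 + (norm (-b))\<^sup>2 + 2 * Re (cinner a (-b))" by (rule norm_add_sq)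
    then have e2: "(norm (a - b))\<^sup>2 = (norm a)\<^sup>2 + (norm b)\<^sup>2 - 2 * Re (cinner a b)"
      by (simp add: cinner_minus_right)
    have "d \<le> norm ((1/2) *\<^sub>R (a + b))" by (rule d_le[OF halfC[OF that]])
    then have "2 * d \<le> norm (a + b)" by simp
    then have "(2*d)\<^sup>2 \<le> (norm (a + b))\<^sup>2" using d0 by (intro power_mono) auto
    then show ?thesis using e1 e2 by (simp add: power_mult_distrib)
  qed
  have cauchy: "Cauchy z"
  proof (rule metric_CauchyI)
    fix e :: real assume e: "0 < e"
    define h0 where "h0 = min 1 (e\<^sup>2 / (4 * (2*d + 1)))"
    have h0: "0 < h0" using e d0 by (simp add: h0_def)
    obtain M where M: "inverse (real (Suc M)) < h0" using reals_Archimedean[OF h0] by blast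
    define h where "h = inverse (real (Suc M))"
    have h: "0 < h" "h < 1" "h < e\<^sup>2 / (4 * (2*d + 1))" using M by (auto simp: h_def h0_def)
    have nz: "norm (z m) \<le> d + h" if "m \<ge> M" for m
    proof -
      have "inverse (real (Suc m)) \<le> h" unfolding h_def using that
        by (simp add: le_imp_inverse_le)
      then show ?thesis using z(2)[of m] by linarith
    qed
    have nz2: "(norm (z m))\<^sup>2 \<le> (d + h)\<^sup>2" if "m \<ge> M" for m
      using nz[OF that] by (intro power_mono) auto
    show "\<exists>M. \<forall>m\<ge>M. \<forall>n\<ge>M. dist (z m) (z n) < e"
    proof (intro exI allI impI)
      fix m n assume mn: "M \<le> m" "M \<le> n"
      have "(norm (z m - z n))\<^sup>2 \<le> 2*(norm (z m))\<^sup>2 + 2*(norm (z n))\<^sup>2 - 4*d\<^sup>2"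
        by (rule para[OF z(1) z(1)])
      also have "\<dots> \<le> 4 * (d+h)\<^sup>2 - 4*d\<^sup>2" using nz2[OF mn(1)] nz2[OF mn(2)] by linarith
      also have "\<dots> = 4 * h * (2*d + h)" by (simp add: power2_eq_square algebra_simps)
      also have "\<dots> \<le> 4 * h * (2*d + 1)" using h d0 by (intro mult_left_mono) auto
      also have "\<dots> < e\<^sup>2"
      proof -
        have "h * (4 * (2*d+1)) < e\<^sup>2" using h(3) d0 by (simp add: pos_less_divide_eq)
        then show ?thesis by (simp add: algebra_simps)
      qed
      finally have "(norm (z m - z n))\<^sup>2 < e\<^sup>2" .
      then have "norm (z m - z n) < e" using e by (simp add: power_less_imp_less_base)
      then show "dist (z m) (z n) < e" by (simp add: dist_norm)
    qed
  qed
  then obtain w0 where lim: "z \<longlonglongrightarrow> w0" using Cauchy_convergent_iff convergent_def by blast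
  have "(\<lambda>m. f (z m)) \<longlonglongrightarrow> f w0" by (rule bounded_linear.tendsto[OF blf lim])
  moreover have "(\<lambda>m. f (z m)) = (\<lambda>m. 1)" using z(1) by (auto simp: C_def)
  ultimately have fw0: "f w0 = 1" using LIMSEQ_const_iff by metis
  have "(\<lambda>m. d + inverse (real (Suc m))) \<longlonglongrightarrow> d + 0"
    by (intro tendsto_add tendsto_const LIMSEQ_inverse_real_of_nat)
  then have nw0: "norm w0 \<le> d"
    using LIMSEQ_le[OF tendsto_norm[OF lim], of "\<lambda>m. d + inverse (real (Suc m))" d] z(2)
    by (auto intro: less_imp_le)
  have w0ne: "w0 \<noteq> 0" using fw0 f0 by auto
  have orth: "cinner v w0 = 0" if fv: "f v = 0" for v
  proof -
    define c where "c = cinner w0 v"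
    define N where "N = (norm v)\<^sup>2"
    define s where "s = 1 / (N + 1)"
    have N: "0 \<le> N" by (simp add: N_def)
    have s: "0 < s" "s * N < 1" using N by (auto simp: s_def)
    define t where "t = - (of_real s * c)"
    have "f (w0 + t *\<^sub>C v) = 1" using fw0 fv by (simp add: add sc)
    then have "d \<le> norm (w0 + t *\<^sub>C v)" by (intro d_le) (simp add: C_def)
    then have "norm w0 \<le> norm (w0 + t *\<^sub>C v)" using nw0 by linarith
    then have "(norm w0)\<^sup>2 \<le> (norm (w0 + t *\<^sub>C v))\<^sup>2" by (intro power_mono) auto
    also have "\<dots> = (norm w0)\<^sup>2 + (norm (t *\<^sub>C v))\<^sup>2 + 2 * Re (cinner w0 (t *\<^sub>C v))"
      by (rule norm_add_sq)
    also have "(norm (t *\<^sub>C v))\<^sup>2 = s\<^sup>2 * (cmod c)\<^sup>2 * N"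
      using s by (simp add: norm_scaleC t_def N_def norm_mult power_mult_distrib)
    also have "Re (cinner w0 (t *\<^sub>C v)) = - s * (cmod c)\<^sup>2"
    proof -
      have "cinner w0 (t *\<^sub>C v) = - (of_real s * (cnj c * c))"
        by (simp add: cinner_scaleC_right t_def c_def)
      also have "cnj c * c = of_real ((cmod c)\<^sup>2)"
        by (metis complex_norm_square mult.commute)
      finally show ?thesis by simp
    qed
    finally have "0 \<le> s * (cmod c)\<^sup>2 * (s * N - 2)" by (simp add: algebra_simps power2_eq_square)
    moreover have "s * N - 2 < 0" using s by simp
    then have "\<forall>X::real. 0 \<le> X * (s*N-2) \<longrightarrow> X \<le> 0" by (auto simp: zero_le_mult_iff)
    ultimately have "s * (cmod c)\<^sup>2 \<le> 0" by blast
    then have "(cmod c)\<^sup>2 \<le> 0" using s by (simp add: mult_le_0_iff)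
    then have "c = 0" by simp
    then show ?thesis by (metis c_def cinner_commute complex_cnj_zero)
  qed
  define w where "w = (1 / (norm w0)\<^sup>2) *\<^sub>R w0"
  have "f z = cinner z w" for z
  proof -
    have "f (z - f z *\<^sub>C w0) = 0" by (simp add: fdiff sc fw0)
    then have "cinner (z - f z *\<^sub>C w0) w0 = 0" by (rule orth)
    then have "cinner z w0 = f z * of_real ((norm w0)\<^sup>2)"
      by (simp add: cinner_diff_left cinner_scaleC_left cinner_self_norm)
    then show ?thesis using w0ne by (simp add: w_def cinner_scaleR_right)
  qed
  then show ?thesis by blast
qed

lemma neumann_fix:
  fixes g :: "'a::real_normed_vector \<Rightarrow> 'a"
  assumes bl: "bounded_linear g" and gq: "\<And>z. norm (g z) \<le> q * norm z"
    and q: "0 \<le> q" "q < 1" and fx: "x = \<phi> + g x"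
  shows "(\<lambda>i. (g ^^ i) \<phi>) sums x"
proof -
  have lin: "linear g" using bl bounded_linear.linear by blast
  have gx: "g x = x - \<phi>" using fx by (metis add_diff_cancel_left')
  have rem: "x - (\<Sum>i<N. (g ^^ i) \<phi>) = (g ^^ N) x" for N
  proof (induction N)
    case 0 then show ?case by simp
  next
    case (Suc N)
    have "(g ^^ Suc N) x = g ((g ^^ N) x)" by simp
    also have "\<dots> = g (x - (\<Sum>i<N. (g ^^ i) \<phi>))" using Suc by simp
    also have "\<dots> = g x - (\<Sum>i<N. g ((g ^^ i) \<phi>))" using lin by (simp add: linear_diff linear_sum)
    also have "\<dots> = (x - \<phi>) - (\<Sum>i<N. (g ^^ Suc i) \<phi>)" using gx by simp
    also have "\<dots> = x - (\<Sum>i<Suc N. (g ^^ i) \<phi>)"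
    proof -
      have sh: "(\<Sum>i<Suc N. (g ^^ i) \<phi>) = (g ^^ 0) \<phi> + (\<Sum>i<N. (g ^^ Suc i) \<phi>)"
        by (simp only: sum.lessThan_Suc_shift)
      show ?thesis by (simp only: sh diff_diff_eq funpow_0 id_apply)
    qed
    finally show ?case by simp
  qed
  have pw: "norm ((g ^^ N) w) \<le> q ^ N * norm w" for N w
  proof (induction N)
    case 0 then show ?case by simp
  next
    case (Suc N)
    have "norm ((g ^^ Suc N) w) = norm (g ((g ^^ N) w))" by simp
    also have "\<dots> \<le> q * norm ((g ^^ N) w)" by (rule gq)
    also have "\<dots> \<le> q * (q ^ N * norm w)" using Suc q by (intro mult_left_mono) auto
    finally show ?case by simp
  qed
  have "(\<lambda>N. q ^ N * norm x) \<longlonglongrightarrow> 0 * norm x"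
    using q by (intro tendsto_mult tendsto_const LIMSEQ_power_zero) simp
  moreover have "eventually (\<lambda>N. norm (x - (\<Sum>i<N. (g ^^ i) \<phi>)) \<le> q ^ N * norm x) sequentially"
    by (intro always_eventually allI, subst rem, rule pw)
  ultimately have "(\<lambda>N. x - (\<Sum>i<N. (g ^^ i) \<phi>)) \<longlonglongrightarrow> 0"
    using Lim_null_comparison by simp
  then have "(\<lambda>N. x - (x - (\<Sum>i<N. (g ^^ i) \<phi>))) \<longlonglongrightarrow> x - 0"
    by (intro tendsto_diff tendsto_const)
  then show ?thesis by (simp add: sums_def)
qed

context
  fixes tens :: "'h1::chilbert_space \<Rightarrow> 'h2::chilbert_space \<Rightarrow> 'h::chilbert_space"
  assumes T: "hilbert_tensor tens"
begin

lemma tens_add1: "tens (a + a') b = tens a b + tens a' b"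
  using T unfolding hilbert_tensor_def clinear_def by blast
lemma tens_scale1: "tens (c *\<^sub>C a) b = c *\<^sub>C tens a b"
  using T unfolding hilbert_tensor_def clinear_def by blast
lemma tens_add2: "tens a (b + b') = tens a b + tens a b'"
  using T unfolding hilbert_tensor_def clinear_def by blast
lemma tens_scale2: "tens a (c *\<^sub>C b) = c *\<^sub>C tens a b"
  using T unfolding hilbert_tensor_def clinear_def by blast
lemma tens_cinner: "cinner (tens a b) (tens c d) = cinner a c * cinner b d"
  using T unfolding hilbert_tensor_def by blast
lemma tens_zero1 [simp]: "tens 0 b = 0"
  using tens_scale1[of 0 0 b] by simp
lemma tens_minus2: "tens a (- b) = - tens a b"
  using tens_scale2[of a "-1" b] by (simp add: scaleC_minus1)
lemma tens_diff2: "tens a (b - b') = tens a b - tens a b'"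
  by (simp only: diff_conv_add_uminus tens_add2 tens_minus2)
lemma norm_tens: "norm (tens a b) = norm a * norm b"
proof -
  have "(norm (tens a b))\<^sup>2 = Re (cinner (tens a b) (tens a b))" by (simp add: Re_cinner_self)
  also have "\<dots> = (norm a)\<^sup>2 * (norm b)\<^sup>2" by (simp only: tens_cinner) (simp add: cinner_self_norm)
  finally have "(norm (tens a b))\<^sup>2 = (norm a * norm b)\<^sup>2" by (simp add: power_mult_distrib)
  then show ?thesis by (simp add: power2_eq_iff_nonneg)
qed

lemma pinner2_ex: "\<exists>w. \<forall>z. cinner w z = cinner x (tens z y)"
proof -
  have "\<exists>w. \<forall>z. cnj (cinner x (tens z y)) = cinner z w"
  proof (rule riesz[where B="norm x * norm y"])
    fix a b show "cnj (cinner x (tens (a + b) y)) = cnj (cinner x (tens a y)) + cnj (cinner x (tens b y))"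
      by (simp add: tens_add1 cinner_add_right)
  next
    fix c a show "cnj (cinner x (tens (c *\<^sub>C a) y)) = c * cnj (cinner x (tens a y))"
      by (simp add: tens_scale1 cinner_scaleC_right)
  next
    fix z
    have "cmod (cinner x (tens z y)) \<le> norm x * norm (tens z y)" by (rule cauchy_schwarz)
    then show "cmod (cnj (cinner x (tens z y))) \<le> norm x * norm y * norm z"
      by (simp add: norm_tens mult_ac)
  qed
  then obtain w where "\<forall>z. cnj (cinner x (tens z y)) = cinner z w" by blast
  then have "\<forall>z. cinner w z = cinner x (tens z y)"
    by (metis cinner_commute complex_cnj_cnj)
  then show ?thesis by blast
qed

lemma pinner2_char: "cinner (pinner2 tens x y) z = cinner x (tens z y)"
proof -
  obtain w where w: "\<forall>z. cinner w z = cinner x (tens z y)" using pinner2_ex by blast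
  have "\<forall>z. cinner (pinner2 tens x y) z = cinner x (tens z y)"
    unfolding pinner2_def
  proof (rule theI[of _ w])
    show "\<forall>z. cinner w z = cinner x (tens z y)" by (rule w)
  next
    fix w' assume w': "\<forall>z. cinner w' z = cinner x (tens z y)"
    have "cinner (w' - w) (w' - w) = 0" using w w' by (simp add: cinner_diff_left)
    then show "w' = w" using cinner_self_zero by fastforce
  qed
  then show ?thesis by blast
qed

lemma pinner2_unique: assumes "\<And>z. cinner w z = cinner x (tens z y)" shows "pinner2 tens x y = w"
proof -
  have "cinner (pinner2 tens x y - w) (pinner2 tens x y - w) = 0"
    using assms by (simp add: cinner_diff_left pinner2_char)
  then show ?thesis using cinner_self_zero by fastforce
qed

lemma pinner2_add: "pinner2 tens (x + x') y = pinner2 tens x y + pinner2 tens x' y"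
  by (rule pinner2_unique) (simp add: cinner_add_left pinner2_char)
lemma pinner2_scale: "pinner2 tens (c *\<^sub>C x) y = c *\<^sub>C pinner2 tens x y"
  by (rule pinner2_unique) (simp add: cinner_scaleC_left pinner2_char)
lemma pinner2_zero [simp]: "pinner2 tens 0 y = 0"
  by (rule pinner2_unique) simp
lemma pinner2_sum: "pinner2 tens (\<Sum>i\<in>S. f i) y = (\<Sum>i\<in>S. pinner2 tens (f i) y)"
  by (rule pinner2_unique) (simp add: cinner_sum_left pinner2_char)
lemma pinner2_tens: "pinner2 tens (tens a b) y = cinner b y *\<^sub>C a"
  by (rule pinner2_unique) (simp add: cinner_scaleC_left tens_cinner mult.commute)
lemma norm_pinner2: "norm (pinner2 tens x y) \<le> norm x * norm y"
proof -
  define w where "w = pinner2 tens x y"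
  have "(norm w)\<^sup>2 = Re (cinner w w)" by (simp add: Re_cinner_self)
  also have "\<dots> = Re (cinner x (tens w y))" by (simp add: w_def pinner2_char)
  also have "\<dots> \<le> norm x * norm (tens w y)" by (rule cauchy_schwarz_Re)
  also have "\<dots> = (norm x * norm y) * norm w" by (simp add: norm_tens mult_ac)
  finally have "norm w * norm w \<le> (norm x * norm y) * norm w" by (simp add: power2_eq_square)
  then show ?thesis unfolding w_def[symmetric]
    by (cases "norm w = 0") (auto simp: mult_le_cancel_right)
qed

lemma Ptil_add: "Ptil tens n y u (a + b) = Ptil tens n y u a + Ptil tens n y u b"
  by (simp add: Ptil_def pinner2_add tens_add1 sum.distrib)
lemma Ptil_scaleR: "Ptil tens n y u (r *\<^sub>R a) = r *\<^sub>R Ptil tens n y u a"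
  by (simp add: Ptil_def scaleR_scaleC pinner2_scale tens_scale1 scaleC_sum_right)
lemma Ptil_zero_arg [simp]: "Ptil tens n y u 0 = 0"
  by (simp add: Ptil_def)
lemma norm_Ptil: "norm (Ptil tens n y u z) \<le> norm z * (\<Sum>i<n. norm (y i) * norm (u i))"
proof -
  have "norm (Ptil tens n y u z) \<le> (\<Sum>i<n. norm (tens (pinner2 tens z (y i)) (u i)))"
    unfolding Ptil_def by (rule norm_sum)
  also have "\<dots> \<le> (\<Sum>i<n. norm z * (norm (y i) * norm (u i)))"
  proof (rule sum_mono)
    fix i
    have "norm (pinner2 tens z (y i)) * norm (u i) \<le> (norm z * norm (y i)) * norm (u i)"
      by (intro mult_right_mono norm_pinner2) auto
    then show "norm (tens (pinner2 tens z (y i)) (u i)) \<le> norm z * (norm (y i) * norm (u i))"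
      by (simp add: norm_tens mult_ac)
  qed
  also have "\<dots> = norm z * (\<Sum>i<n. norm (y i) * norm (u i))" by (simp add: sum_distrib_left)
  finally show ?thesis .
qed

lemma pinner2_Ptil:
  assumes "\<forall>i<n. cinner (u i) (y j) = (if i = j then 1 else 0)" "j < n"
  shows "pinner2 tens (Ptil tens n y u x) (y j) = pinner2 tens x (y j)"
proof -
  have "pinner2 tens (Ptil tens n y u x) (y j) = (\<Sum>i<n. cinner (u i) (y j) *\<^sub>C pinner2 tens x (y i))"
    by (simp add: Ptil_def pinner2_sum pinner2_tens)
  also have "\<dots> = (\<Sum>i<n. if i = j then pinner2 tens x (y i) else 0)"
    using assms(1) by (intro sum.cong) (auto simp: scaleC_one)
  also have "\<dots> = pinner2 tens x (y j)" using assms(2) by simp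
  finally show ?thesis .
qed

lemma G_bl:
  fixes A :: "'h \<Rightarrow> 'h"
  assumes A: "bounded_clinear A"
  shows "bounded_linear (A \<circ> Pu tens n y u)"
proof -
  obtain K where K: "\<And>x. norm (A x) \<le> norm x * K" and cl: "clinear A"
    using A unfolding bounded_clinear_def by blast
  have Aadd: "\<And>a b. A (a + b) = A a + A b" and Asc: "\<And>c a. A (c *\<^sub>C a) = c *\<^sub>C A a"
    using cl unfolding clinear_def by blast+
  define S where "S = (\<Sum>i<n. norm (y i) * norm (u i))"
  define KA where "KA = \<bar>K\<bar> + 1"
  have KA: "\<And>x. norm (A x) \<le> KA * norm x"
  proof -
    fix x :: 'h have "norm x * K \<le> KA * norm x" unfolding KA_def
      by (metis abs_ge_self add_increasing2 mult.commute mult_left_mono norm_ge_zero zero_le_one order_trans le_add_same_cancel1)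
    then show "norm (A x) \<le> KA * norm x" using K[of x] by linarith
  qed
  have KA0: "0 \<le> KA" by (simp add: KA_def)
  show ?thesis
  proof (rule bounded_linear_intro[where K="KA * (1 + S)"])
    fix a b show "(A \<circ> Pu tens n y u) (a + b) = (A \<circ> Pu tens n y u) a + (A \<circ> Pu tens n y u) b"
      by (simp add: Pu_def Ptil_add Aadd[symmetric] algebra_simps)
  next
    fix r a show "(A \<circ> Pu tens n y u) (r *\<^sub>R a) = r *\<^sub>R (A \<circ> Pu tens n y u) a"
    proof -
      have "Pu tens n y u (r *\<^sub>R a) = r *\<^sub>R Pu tens n y u a"
        by (simp add: Pu_def Ptil_scaleR scale_right_diff_distrib)
      moreover have "A (r *\<^sub>R v) = r *\<^sub>R A v" for v by (simp only: scaleR_scaleC Asc)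
      ultimately show ?thesis by simp
    qed
  next
    fix z
    have h1: "norm (A (Pu tens n y u z)) \<le> KA * norm (Pu tens n y u z)" by (rule KA)
    have h2: "norm (Pu tens n y u z) \<le> norm z + norm z * S"
      unfolding Pu_def S_def using norm_Ptil[of n y u z] norm_triangle_ineq4[of z "Ptil tens n y u z"]
      by linarith
    have h3: "KA * norm (Pu tens n y u z) \<le> KA * (norm z + norm z * S)"
      using h2 KA0 by (rule mult_left_mono)
    have h4: "KA * (norm z + norm z * S) = norm z * (KA * (1 + S))" by (simp add: algebra_simps)
    show "norm ((A \<circ> Pu tens n y u) z) \<le> norm z * (KA * (1 + S))"
      using h1 h3 h4 by simp
  qed
qed

end

theorem corollary2:
  fixes tens :: "'h1::chilbert_space \<Rightarrow> 'h2::chilbert_space \<Rightarrow> 'h::chilbert_space"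
    and J :: "nat set" and \<psi> :: "nat \<Rightarrow> 'h1"
    and A :: "'h \<Rightarrow> 'h" and \<phi> :: 'h
    and n :: nat and y k :: "nat \<Rightarrow> 'h2"
  assumes tensor: "hilbert_tensor tens"
    and onb: "orthonormal_basis J \<psi>"
    and A_bdd: "bounded_clinear A"
    and y_on: "\<forall>i<n. \<forall>j<n. cinner (y i) (y j) = (if i = j then 1 else 0)"
    and k_indep: "clin_indep n k"
    and k_y: "\<forall>i<n. \<forall>j<n. cinner (k i) (y j) = (if i = j then 1 else 0)"
    and norm_lt: "onorm (A \<circ> Pu tens n y k) < 1"
    and Ptil_zero: "Ptil tens n y k (\<Sum>i. ((A \<circ> Pu tens n y k) ^^ i) \<phi>) = 0"
  shows "\<exists>\<delta>>0. \<forall>\<epsilon>::complex. norm \<epsilon> < \<delta> \<longrightarrow>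
     (\<forall>\<eta> :: nat \<Rightarrow> 'h2.
        (\<forall>i<n. norm (\<eta> i) = 1) \<and> (\<forall>i<n. \<forall>j<n. cinner (\<eta> i) (y j) = 0) \<longrightarrow>
        (let k' = (\<lambda>i. k i + \<epsilon> *\<^sub>C \<eta> i);
             x' = (\<Sum>i. ((A \<circ> Pu tens n y k') ^^ i) \<phi>)
         in summable (\<lambda>i. ((A \<circ> Pu tens n y k') ^^ i) \<phi>) \<and>
            Ptil tens n y k' x' = 0 \<and>
            (clin_indep n k' \<longrightarrow>
               A x' + \<phi> = x' \<and>
               (\<forall>i<n. pinner2 tens x' (y i) = 0) \<and>
               (\<forall>j\<in>J. \<forall>i<n. cinner x' (tens (\<psi> j) (y i)) = 0))))"
proof -
  have ten: "hilbert_tensor tens" by (rule tensor)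
  note TL = tens_add1[OF ten] tens_add2[OF ten] tens_scale1[OF ten] tens_scale2[OF ten]
    pinner2_char[OF ten] pinner2_zero[OF ten] tens_zero1[OF ten]
  obtain K where K: "\<And>x. norm (A x) \<le> norm x * K" and cl: "clinear A"
    using A_bdd unfolding bounded_clinear_def by blast
  have Aadd: "\<And>a b. A (a + b) = A a + A b" and Asc: "\<And>c a. A (c *\<^sub>C a) = c *\<^sub>C A a"
    using cl unfolding clinear_def by blast+
  have Adiff: "A (a - b) = A a - A b" for a b
    using Aadd[of "a - b" b] by simp
  define KA where "KA = \<bar>K\<bar> + 1"
  have KA: "norm (A x) \<le> KA * norm x" for x
  proof -
    have "norm x * K \<le> norm x * KA" unfolding KA_def
      by (intro mult_left_mono) auto
    then show ?thesis using K[of x] by (simp add: mult.commute)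
  qed
  have KA0: "0 < KA" by (simp add: KA_def)
  have ny: "norm (y i) = 1" if "i < n" for i
  proof -
    have "cinner (y i) (y i) = 1" using y_on that by simp
    then have "complex_of_real ((norm (y i))\<^sup>2) = 1" by (simp only: cinner_self_norm)
    then have "(norm (y i))\<^sup>2 = 1" by (simp only: of_real_eq_1_iff)
    then show ?thesis using norm_ge_zero[of "y i"] by (simp add: power2_eq_1_iff del: norm_ge_zero)
  qed
  define q0 where "q0 = onorm (A \<circ> Pu tens n y k)"
  have blk: "bounded_linear (A \<circ> Pu tens n y k)" by (rule G_bl[OF ten A_bdd])
  have q0pos: "0 \<le> q0" unfolding q0_def by (rule onorm_pos_le[OF blk])
  have q0lt: "q0 < 1" using norm_lt by (simp add: q0_def)
  have Gk: "norm ((A \<circ> Pu tens n y k) z) \<le> q0 * norm z" for z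
    unfolding q0_def by (rule onorm[OF blk])
  have "\<exists>!x. \<phi> + (A \<circ> Pu tens n y k) x = x"
  proof (rule banach_fix_type[OF q0pos q0lt])
    show "\<forall>a b. dist (\<phi> + (A \<circ> Pu tens n y k) a) (\<phi> + (A \<circ> Pu tens n y k) b) \<le> q0 * dist a b"
    proof (intro allI)
      fix a b
      have "(A \<circ> Pu tens n y k) a - (A \<circ> Pu tens n y k) b = (A \<circ> Pu tens n y k) (a - b)"
        using blk bounded_linear.linear linear_diff by metis
      then show "dist (\<phi> + (A \<circ> Pu tens n y k) a) (\<phi> + (A \<circ> Pu tens n y k) b) \<le> q0 * dist a b"
        using Gk[of "a - b"] by (simp add: dist_norm)
    qed
  qed
  then obtain x0 where x0: "\<phi> + (A \<circ> Pu tens n y k) x0 = x0" by blast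
  have sk: "(\<lambda>i. ((A \<circ> Pu tens n y k) ^^ i) \<phi>) sums x0"
    by (rule neumann_fix[OF blk Gk q0pos q0lt]) (use x0 in simp)
  then have "(\<Sum>i. ((A \<circ> Pu tens n y k) ^^ i) \<phi>) = x0" by (rule sums_unique[symmetric])
  then have Pk0: "Ptil tens n y k x0 = 0" using Ptil_zero by simp
  have px0: "pinner2 tens x0 (y j) = 0" if "j < n" for j
  proof -
    have "pinner2 tens x0 (y j) = pinner2 tens (Ptil tens n y k x0) (y j)"
      using pinner2_Ptil[OF ten _ that, where u=k and x=x0] k_y that by simp
    also have "\<dots> = 0" using Pk0 TL by simp
    finally show ?thesis .
  qed
  have Puk: "Pu tens n y k x0 = x0" using Pk0 by (simp add: Pu_def)
  have Ax0: "A x0 + \<phi> = x0" using x0 Puk by (simp add: add.commute)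
  define \<delta> where "\<delta> = (1 - q0) / (KA * (real n + 1))"
  have \<delta>: "0 < \<delta>" using q0lt KA0 by (simp add: \<delta>_def)
  show ?thesis
  proof (intro exI[of _ \<delta>] conjI \<delta> allI impI)
    fix \<epsilon> :: complex and \<eta> :: "nat \<Rightarrow> 'h2"
    assume e: "cmod \<epsilon> < \<delta>"
    assume "(\<forall>i<n. norm (\<eta> i) = 1) \<and> (\<forall>i<n. \<forall>j<n. cinner (\<eta> i) (y j) = 0)"
    then have eta1: "\<And>i. i < n \<Longrightarrow> norm (\<eta> i) = 1" and etay: "\<And>i j. i < n \<Longrightarrow> j < n \<Longrightarrow> cinner (\<eta> i) (y j) = 0"
      by auto
    define k' where "k' = (\<lambda>i. k i + \<epsilon> *\<^sub>C \<eta> i)"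
    have Pk'0: "Ptil tens n y k' x0 = 0" by (simp add: Ptil_def px0 TL)
    have Puk': "Pu tens n y k' x0 = x0" using Pk'0 by (simp add: Pu_def)
    have bl': "bounded_linear (A \<circ> Pu tens n y k')" by (rule G_bl[OF ten A_bdd])
    define q where "q = q0 + KA * real n * cmod \<epsilon>"
    have q0q: "0 \<le> q" using q0pos KA0 by (simp add: q_def)
    have qlt: "q < 1"
    proof -
      have "KA * real n * cmod \<epsilon> \<le> KA * (real n + 1) * cmod \<epsilon>"
        using KA0 by (intro mult_right_mono mult_left_mono) auto
      also have "\<dots> < KA * (real n + 1) * \<delta>"
        using e KA0 by (intro mult_strict_left_mono) auto
      also have "\<dots> = 1 - q0" using KA0 by (simp add: \<delta>_def)
      finally show ?thesis by (simp add: q_def)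
    qed
    have Gk': "norm ((A \<circ> Pu tens n y k') z) \<le> q * norm z" for z
    proof -
      define D where "D = (\<Sum>i<n. tens (pinner2 tens z (y i)) (\<epsilon> *\<^sub>C \<eta> i))"
      have "Ptil tens n y k' z = Ptil tens n y k z + D"
        by (simp add: Ptil_def D_def k'_def TL sum.distrib)
      then have "Pu tens n y k' z = Pu tens n y k z - D" by (simp add: Pu_def)
      then have eq: "(A \<circ> Pu tens n y k') z = (A \<circ> Pu tens n y k) z - A D" by (simp add: Adiff)
      have nD: "norm D \<le> real n * cmod \<epsilon> * norm z"
      proof -
        have "norm D \<le> (\<Sum>i<n. norm (tens (pinner2 tens z (y i)) (\<epsilon> *\<^sub>C \<eta> i)))"
          unfolding D_def by (rule norm_sum)
        also have "\<dots> \<le> (\<Sum>i<n. cmod \<epsilon> * norm z)"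
        proof (rule sum_mono)
          fix i assume "i \<in> {..<n}"
          then have i: "i < n" by simp
          have pn: "norm (pinner2 tens z (y i)) \<le> norm z" using norm_pinner2[OF ten, of z "y i"] ny[OF i] by simp
          show "norm (tens (pinner2 tens z (y i)) (\<epsilon> *\<^sub>C \<eta> i)) \<le> cmod \<epsilon> * norm z"
            using mult_right_mono[OF pn, of "cmod \<epsilon>"] eta1[OF i]
            by (simp add: norm_tens[OF ten] norm_scaleC mult.commute)
        qed
        also have "\<dots> = real n * cmod \<epsilon> * norm z" by simp
        finally show ?thesis .
      qed
      have "norm ((A \<circ> Pu tens n y k') z) \<le> norm ((A \<circ> Pu tens n y k) z) + norm (A D)"
        unfolding eq by (rule norm_triangle_ineq4)
      also have "\<dots> \<le> q0 * norm z + KA * (real n * cmod \<epsilon> * norm z)"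
        using Gk[of z] KA[of D] nD KA0 by (meson add_mono mult_left_mono order_trans less_imp_le)
      also have "\<dots> = q * norm z" by (simp add: q_def algebra_simps)
      finally show ?thesis .
    qed
    have fx': "x0 = \<phi> + (A \<circ> Pu tens n y k') x0" using Ax0 Puk' by (simp add: add.commute)
    have sk': "(\<lambda>i. ((A \<circ> Pu tens n y k') ^^ i) \<phi>) sums x0"
      by (rule neumann_fix[OF bl' Gk' q0q qlt fx'])
    have sum': "(\<Sum>i. ((A \<circ> Pu tens n y k') ^^ i) \<phi>) = x0" using sk' by (rule sums_unique[symmetric])
    have orth: "cinner x0 (tens (\<psi> j) (y i)) = 0" if "i < n" for i j
      using pinner2_char[OF ten, of x0 "y i" "\<psi> j"] px0[OF that] by simp
    show "let k' = (\<lambda>i. k i + \<epsilon> *\<^sub>C \<eta> i);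
             x' = (\<Sum>i. ((A \<circ> Pu tens n y k') ^^ i) \<phi>)
         in summable (\<lambda>i. ((A \<circ> Pu tens n y k') ^^ i) \<phi>) \<and>
            Ptil tens n y k' x' = 0 \<and>
            (clin_indep n k' \<longrightarrow>
               A x' + \<phi> = x' \<and>
               (\<forall>i<n. pinner2 tens x' (y i) = 0) \<and>
               (\<forall>j\<in>J. \<forall>i<n. cinner x' (tens (\<psi> j) (y i)) = 0))"
      unfolding Let_def k'_def[symmetric] sum'
      using sk' Pk'0 Ax0 px0 orth by (auto simp: sums_summable)
  qed
qed

end
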